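(* Let $\mathbb{F}_q$ be a finite field with $\mathrm{char}(\mathbb{F}_q)>3$ and $3\mid q-1$, let $x$ be a generator of $\mathbb{F}_q^\times$, and let $C=\langle x^3\rangle$ be the subgroup of cubes in $\mathbb{F}_q^\times$. For nonzero $a,b,c,d\in\mathbb{F}_q$, if $a^{-1}c$ and $b^{-1}d$ lie in the same coset of $C$ in $\mathbb{F}_q^\times$, then $J_3(a,b)$ is conjugate to $J_3(c,d)$.
   Context: $\mathfrak{sl}_3(\mathbb{F}_q)$ is the Lie algebra of $3\times3$ traceless matrices over $\mathbb{F}_q$. Fix a primitive cube root of unity $u\in\mathbb{F}_q$. For nonzero $a,b\in\mathbb{F}_q$, $J_3(a,b)$ denotes the decomposition $\mathfrak{sl}_3(\mathbb{F}_q)=H_0\oplus H_1\oplus H_2\oplus H_3$, where $H_0$ is the subalgebra of traceless diagonal matrices and, for $j=1,2,3$ with $(\lambda_j,\mu_j)=(1,1),(u,u^2),(u^2,u)$ respectively, $H_j=\left\langle \begin{pmatrix}0&1&0\\0&0&\lambda_j a\\ \mu_j ab&0&0\end{pmatrix},\begin{pmatrix}0&0&1\\ \mu_j ab&0&0\\0&\lambda_j b&0\end{pmatrix}\right\rangle_{\mathbb{F}_q}$. (Such a decomposition is called a $J_3$-decomposition.) Two such decompositions are conjugate if there is a Lie algebra automorphism of $\mathfrak{sl}_3(\mathbb{F}_q)$ mapping each component of the first onto exactly one component of the second. *)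

theory Defs
  imports "HOL-Analysis.Analysis"
begin

definition m3 :: "'a \<Rightarrow> 'a \<Rightarrow> 'a \<Rightarrow> 'a \<Rightarrow> 'a \<Rightarrow> 'a \<Rightarrow> 'a \<Rightarrow> 'a \<Rightarrow> 'a \<Rightarrow> 'a^3^3" where
  "m3 a11 a12 a13 a21 a22 a23 a31 a32 a33 =
     (\<chi> i j. if i = 0 then (if j = 0 then a11 else if j = 1 then a12 else a13)
             else if i = 1 then (if j = 0 then a21 else if j = 1 then a22 else a23)
             else (if j = 0 then a31 else if j = 1 then a32 else a33))"

definition mtrace :: "'a::comm_ring_1^3^3 \<Rightarrow> 'a" where
  "mtrace A = (\<Sum>i\<in>UNIV. A $ i $ i)"

definition smul :: "'a::comm_ring_1 \<Rightarrow> 'a^3^3 \<Rightarrow> 'a^3^3" where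
  "smul c A = (\<chi> i j. c * A $ i $ j)"

definition sl3 :: "('a::comm_ring_1^3^3) set" where
  "sl3 = {A. mtrace A = 0}"

definition bracket :: "'a::comm_ring_1^3^3 \<Rightarrow> 'a^3^3 \<Rightarrow> 'a^3^3" where
  "bracket X Y = X ** Y - Y ** X"

definition lie_aut_sl3 :: "('a::field^3^3 \<Rightarrow> 'a^3^3) \<Rightarrow> bool" where
  "lie_aut_sl3 \<phi> \<longleftrightarrow> bij_betw \<phi> sl3 sl3
     \<and> (\<forall>X\<in>sl3. \<forall>Y\<in>sl3. \<phi> (X + Y) = \<phi> X + \<phi> Y)
     \<and> (\<forall>c. \<forall>X\<in>sl3. \<phi> (smul c X) = smul c (\<phi> X))
     \<and> (\<forall>X\<in>sl3. \<forall>Y\<in>sl3. \<phi> (bracket X Y) = bracket (\<phi> X) (\<phi> Y))"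

text \<open>Components H_0,...,H_3 of J_3(a,b), relative to the fixed cube root of unity u.\<close>
definition J3_lam :: "'a::field \<Rightarrow> nat \<Rightarrow> 'a" where
  "J3_lam u j = (if j = 1 then 1 else if j = 2 then u else u^2)"

definition J3_mu :: "'a::field \<Rightarrow> nat \<Rightarrow> 'a" where
  "J3_mu u j = (if j = 1 then 1 else if j = 2 then u^2 else u)"

definition J3 :: "'a::field \<Rightarrow> 'a \<Rightarrow> 'a \<Rightarrow> nat \<Rightarrow> ('a^3^3) set" where
  "J3 u a b j =
    (if j = 0 then {A \<in> sl3. \<forall>i k. i \<noteq> k \<longrightarrow> A $ i $ k = 0}
     else {smul s (m3 0 1 0  0 0 (J3_lam u j * a)  (J3_mu u j * a * b) 0 0)
           + smul t (m3 0 0 1  (J3_mu u j * a * b) 0 0  0 (J3_lam u j * b) 0) | s t. True})"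

definition J3_conjugate :: "(nat \<Rightarrow> ('a::field^3^3) set) \<Rightarrow> (nat \<Rightarrow> ('a^3^3) set) \<Rightarrow> bool" where
  "J3_conjugate H H' \<longleftrightarrow> (\<exists>\<phi>. lie_aut_sl3 \<phi> \<and>
      (\<forall>i<4. \<exists>!j. j < 4 \<and> \<phi> ` H i = H' j))"

end

theory Submission imports Defs begin
lemma three0: "(3::3) = 0" by simp
lemma all3: "(\<forall>i::3. P i) \<longleftrightarrow> P 0 \<and> P 1 \<and> P 2"
  by (metis forall_3 three0)
lemma sum3: "sum f (UNIV::3 set) = f 0 + f 1 + f 2"
  by (simp add: sum_3 three0 ac_simps)
lemma neq3: "(0::3) \<noteq> 1" "(0::3) \<noteq> 2" "(1::3) \<noteq> 2" "(1::3) \<noteq> 0" "(2::3) \<noteq> 0" "(2::3) \<noteq> 1" by simp_all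

definition dconj :: "(3 \<Rightarrow> 'a::field) \<Rightarrow> 'a^3^3 \<Rightarrow> 'a^3^3" where
  "dconj e X = (\<chi> i j. e i * X$i$j * inverse (e j))"

lemma dconj_nth[simp]: "dconj e X $ i $ j = e i * X$i$j * inverse (e j)"
  by (simp add: dconj_def)

lemma dconj_inv: assumes "\<And>i. e i \<noteq> 0"
  shows "dconj (\<lambda>i. inverse (e i)) (dconj e X) = X"
  using assms by (simp add: vec_eq_iff field_simps)

lemma dconj_trace: assumes "\<And>i. e i \<noteq> 0" shows "mtrace (dconj e X) = mtrace X"
  unfolding mtrace_def using assms by (simp add: field_simps)

lemma dconj_sl3: assumes "\<And>i. e i \<noteq> 0" shows "X \<in> sl3 \<Longrightarrow> dconj e X \<in> sl3"
  using dconj_trace[OF assms] by (simp add: sl3_def)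

lemma dconj_add: "dconj e (X + Y) = dconj e X + dconj e Y"
  by (simp add: vec_eq_iff algebra_simps)

lemma dconj_smul: "dconj e (smul c X) = smul c (dconj e X)"
  by (simp add: vec_eq_iff smul_def algebra_simps)

lemma dconj_mult: assumes "\<And>i. e i \<noteq> 0"
  shows "dconj e (X ** Y) = dconj e X ** dconj e Y"
  using assms by (simp add: vec_eq_iff matrix_matrix_mult_def sum3 field_simps)

lemma dconj_bracket: assumes "\<And>i. e i \<noteq> 0"
  shows "dconj e (bracket X Y) = bracket (dconj e X) (dconj e Y)"
proof -
  have "dconj e (A - B) = dconj e A - dconj e B" for A B
    by (simp add: vec_eq_iff algebra_simps)
  thus ?thesis unfolding bracket_def by (simp add: dconj_mult[OF assms])
qed

lemma dconj_aut: assumes "\<And>i. e i \<noteq> 0" shows "lie_aut_sl3 (dconj e)"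
  unfolding lie_aut_sl3_def
proof (intro conjI ballI allI)
  have ie: "\<And>i. inverse (e i) \<noteq> 0" using assms by simp
  show "bij_betw (dconj e) sl3 sl3"
    apply (rule bij_betw_byWitness[where f'="dconj (\<lambda>i. inverse (e i))"])
    using dconj_inv[OF assms] dconj_inv[OF ie] dconj_sl3[OF assms] dconj_sl3[OF ie] by auto
qed (auto simp: dconj_add dconj_smul dconj_bracket[OF assms])
lemma m3_nth: "m3 a11 a12 a13 a21 a22 a23 a31 a32 a33 $ i $ j =
  (if i = 0 then (if j = 0 then a11 else if j = 1 then a12 else a13)
             else if i = 1 then (if j = 0 then a21 else if j = 1 then a22 else a23)
             else (if j = 0 then a31 else if j = 1 then a32 else a33))"
  by (simp add: m3_def)

definition G1 :: "'a::field \<Rightarrow> 'a \<Rightarrow> 'a \<Rightarrow> 'a \<Rightarrow> 'a^3^3" where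
  "G1 l m a b = m3 0 1 0  0 0 (l * a)  (m * a * b) 0 0"
definition G2 :: "'a::field \<Rightarrow> 'a \<Rightarrow> 'a \<Rightarrow> 'a \<Rightarrow> 'a^3^3" where
  "G2 l m a b = m3 0 0 1  (m * a * b) 0 0  0 (l * b) 0"

lemma J3_pos: "j \<noteq> 0 \<Longrightarrow> J3 u a b j =
   {smul s (G1 (J3_lam u j) (J3_mu u j) a b) + smul t (G2 (J3_lam u j) (J3_mu u j) a b) | s t. True}"
  by (simp add: J3_def G1_def G2_def)

definition ee :: "'a::field \<Rightarrow> 'a \<Rightarrow> 3 \<Rightarrow> 'a" where
  "ee r s = (\<lambda>i. if i = 0 then r * s else if i = 1 then s else 1)"

lemma ee_nz: "r \<noteq> 0 \<Longrightarrow> s \<noteq> 0 \<Longrightarrow> ee r s i \<noteq> 0"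
  by (simp add: ee_def)

lemma G1_conj: assumes "r \<noteq> 0" "s \<noteq> 0" "a * s = r * c" "b = r * s^2 * d"
  shows "dconj (ee r s) (G1 l m a b) = smul r (G1 l m c d)"
proof -
  have ab: "a * b = r^2 * s * c * d" using assms
    by (metis (no_types, lifting) mult.assoc mult.left_commute power2_eq_square)
  show ?thesis
  apply (simp only: vec_eq_iff all3)
  apply (simp add: m3_nth G1_def smul_def ee_def neq3)
  apply (intro conjI disjI2)
  using assms(2) apply simp
  using assms(3) apply (simp add: mult.commute)
  using ab assms(1,2) by (simp add: field_simps power2_eq_square)
qed

lemma G2_conj: assumes "r \<noteq> 0" "s \<noteq> 0" "a * s = r * c" "b = r * s^2 * d"
  shows "dconj (ee r s) (G2 l m a b) = smul (r * s) (G2 l m c d)"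
proof -
  have ab: "a * b = r^2 * s * c * d" using assms
    by (metis (no_types, lifting) mult.assoc mult.left_commute power2_eq_square)
  show ?thesis
  apply (simp only: vec_eq_iff all3)
  apply (simp add: m3_nth G2_def smul_def ee_def neq3)
  apply (intro conjI disjI2)
  using ab assms(1,2) apply (simp add: field_simps power2_eq_square)
  using assms(2,4) by (simp add: field_simps power2_eq_square)
qed

lemma smul_smul: "smul a (smul b X) = smul (a * b) X"
  by (simp add: smul_def vec_eq_iff)

lemma J3_img_pos: assumes "r \<noteq> 0" "s \<noteq> 0" "a * s = r * c" "b = r * s^2 * d" "j \<noteq> 0"
  shows "dconj (ee r s) ` J3 u a b j = J3 u c d j"
proof -
  let ?l = "J3_lam u j" and ?m = "J3_mu u j"
  have e: "dconj (ee r s) (smul p (G1 ?l ?m a b) + smul q (G2 ?l ?m a b))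
     = smul (p * r) (G1 ?l ?m c d) + smul (q * (r * s)) (G2 ?l ?m c d)" for p q
    by (simp add: dconj_add dconj_smul G1_conj[OF assms(1-4)] G2_conj[OF assms(1-4)] smul_smul
        mult.commute)
  show ?thesis
    unfolding J3_pos[OF assms(5)]
  proof (safe)
    fix p q show "\<exists>s' t'. dconj (ee r s) (smul p (G1 ?l ?m a b) + smul q (G2 ?l ?m a b)) =
       smul s' (G1 ?l ?m c d) + smul t' (G2 ?l ?m c d) \<and> True"
      using e by blast
  next
    fix p q
    have "smul p (G1 ?l ?m c d) + smul q (G2 ?l ?m c d) =
      dconj (ee r s) (smul (p / r) (G1 ?l ?m a b) + smul (q / (r * s)) (G2 ?l ?m a b))"
      using e assms(1,2) by simp
    thus "smul p (G1 ?l ?m c d) + smul q (G2 ?l ?m c d) \<in> dconj (ee r s) `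
      {smul s (G1 ?l ?m a b) + smul t (G2 ?l ?m a b) |s t. True}" by blast
  qed
qed

lemma J3_img_0: assumes "\<And>i. e i \<noteq> 0"
  shows "dconj e ` J3 u a b 0 = J3 u c d 0"
proof -
  have "dconj e X = X" if "X \<in> J3 u a b 0" for X
  proof -
    have h: "\<forall>i k. i \<noteq> k \<longrightarrow> X$i$k = 0" using that by (simp add: J3_def)
    { fix i k have "dconj e X $ i $ k = X $ i $ k" by (cases "i = k") (simp_all add: h assms) }
    thus ?thesis by (simp add: vec_eq_iff)
  qed
  moreover have "J3 u a b 0 = J3 u c d 0" by (simp add: J3_def)
  ultimately show ?thesis by force
qed

lemma lam_inj: assumes "u^3 = 1" "u \<noteq> 1" "j \<in> {1,2,3}" "k \<in> {1,2,3}"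
  "J3_lam (u::'a::field) j = J3_lam u k" shows "j = k"
proof -
  have u0: "u \<noteq> 0" using assms(1) by auto
  have "u^3 = u * u^2" by (simp add: power2_eq_square power3_eq_cube)
  hence h1: "u^2 \<noteq> 1" using assms(1,2) by auto
  have h2: "u^2 \<noteq> u" using assms(2) u0 by (simp add: power2_eq_square)
  have v: "J3_lam u 1 = 1" "J3_lam u 2 = u" "J3_lam u 3 = u^2" by (simp_all add: J3_lam_def)
  show ?thesis using assms(3,4,5) v h1 h2 assms(2)
    by (auto simp del: J3_lam_def)
qed

lemma J3_distinct: assumes "u^3 = 1" "u \<noteq> 1" "j < 4" "k < 4" "c \<noteq> 0"
  "J3 (u::'a::field) c d j = J3 u c d k" shows "j = k"
proof -
  have mem: "G1 (J3_lam u i) (J3_mu u i) c d \<in> J3 u c d i" if "i \<noteq> 0" for i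
    unfolding J3_pos[OF that]
    by (rule CollectI, rule exI[of _ 1], rule exI[of _ 0], simp add: smul_def vec_eq_iff)
  have not0: "G1 l m c d \<notin> J3 u c d 0" for l m
  proof
    assume "G1 l m c d \<in> J3 u c d 0"
    hence "G1 l m c d $ 0 $ 1 = 0" by (simp add: J3_def neq3)
    thus False by (simp add: G1_def m3_nth neq3)
  qed
  have key: "G1 (J3_lam u i) (J3_mu u i) c d \<in> J3 u c d i' \<Longrightarrow> i \<noteq> 0 \<Longrightarrow> i' \<noteq> 0
     \<Longrightarrow> J3_lam u i = J3_lam u i'" for i i'
  proof -
    assume "G1 (J3_lam u i) (J3_mu u i) c d \<in> J3 u c d i'" "i \<noteq> 0" "i' \<noteq> 0"
    then obtain p q where pq: "G1 (J3_lam u i) (J3_mu u i) c d =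
       smul p (G1 (J3_lam u i') (J3_mu u i') c d) + smul q (G2 (J3_lam u i') (J3_mu u i') c d)"
      using J3_pos by blast
    have h01: "p = 1" using arg_cong[OF pq, of "\<lambda>X. X $ 0 $ 1"]
      by (simp add: G1_def G2_def m3_nth smul_def neq3)
    have h02: "q = 0" using arg_cong[OF pq, of "\<lambda>X. X $ 0 $ 2"]
      by (simp add: G1_def G2_def m3_nth smul_def neq3)
    show ?thesis using arg_cong[OF pq, of "\<lambda>X. X $ 1 $ 2"] h01 h02 assms(5)
      by (simp add: G1_def G2_def m3_nth smul_def neq3)
  qed
  show ?thesis
  proof (cases "j = 0 \<or> k = 0")
    case True
    show ?thesis
    proof (rule ccontr)
      assume jk: "j \<noteq> k"
      show False
      proof (cases "j = 0")
        case True
        hence "k \<noteq> 0" using jk by simp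
        thus False using mem[of k] not0 assms(6) True by simp
      next
        case False
        hence "k = 0" using \<open>j = 0 \<or> k = 0\<close> by simp
        thus False using mem[of j] not0 assms(6) False by simp
      qed
    qed
  next
    case False
    hence "J3_lam u j = J3_lam u k" using key[of j k] mem[of j] assms(6) by simp
    moreover have "j \<in> {1,2,3}" "k \<in> {1,2,3}" using assms(3,4) False by auto
    ultimately show ?thesis using lam_inj[OF assms(1,2)] by blast
  qed
qed

lemma aux: "(a::'a::field)\<noteq>0 \<Longrightarrow> b\<noteq>0 \<Longrightarrow> g\<noteq>0 \<Longrightarrow> p\<noteq>0 \<Longrightarrow> q\<noteq>0 \<Longrightarrow> b = ((p/q) * a / (a*g*p^3)) * (p/q)^2 * (b*g*q^3)"
  by (simp add: field_simps power2_eq_square power3_eq_cube)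

theorem lemma3p9:
  fixes u x a b c d :: "'a::{field,finite}"
  assumes "CHAR('a) > 3"
    and "3 dvd (CARD('a) - 1)"
    and "u ^ 3 = 1" and "u \<noteq> 1"
    and "x \<noteq> 0" and "\<forall>y. y \<noteq> 0 \<longrightarrow> (\<exists>n::nat. y = x ^ n)"
    and "a \<noteq> 0" and "b \<noteq> 0" and "c \<noteq> 0" and "d \<noteq> 0"
    and "\<exists>g. g \<noteq> 0 \<and> inverse a * c \<in> (\<lambda>z. g * z) ` {x ^ (3 * n) | n. True}
                   \<and> inverse b * d \<in> (\<lambda>z. g * z) ` {x ^ (3 * n) | n. True}"
  shows "J3_conjugate (J3 u a b) (J3 u c d)"
proof -
  obtain g n1 n2 where g: "g \<noteq> 0" "inverse a * c = g * (x ^ n1) ^ 3" "inverse b * d = g * (x ^ n2)^3"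
  proof -
    from assms(11) obtain g where g: "g \<noteq> 0"
      "inverse a * c \<in> (\<lambda>z. g * z) ` {x ^ (3 * n) | n. True}"
      "inverse b * d \<in> (\<lambda>z. g * z) ` {x ^ (3 * n) | n. True}" by blast
    from g(2) obtain n1 where n1: "inverse a * c = g * x ^ (3 * n1)" by blast
    from g(3) obtain n2 where n2: "inverse b * d = g * x ^ (3 * n2)" by blast
    have pw: "x ^ (3 * n) = (x ^ n) ^ 3" for n :: nat by (subst mult.commute) (rule power_mult)
    show ?thesis apply (rule that[of g n1 n2]) using g(1) n1 n2 pw by simp_all
  qed
  define p where "p = x ^ n1"
  define q where "q = x ^ n2"
  have pq: "p \<noteq> 0" "q \<noteq> 0" using assms(5) by (auto simp: p_def q_def)
  have c: "c = a * g * p^3"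
  proof -
    have "c = a * (inverse a * c)" using assms(7) by simp
    also have "\<dots> = a * g * p^3" using g(2) unfolding p_def by (simp add: mult.assoc)
    finally show ?thesis .
  qed
  have d: "d = b * g * q^3"
  proof -
    have "d = b * (inverse b * d)" using assms(8) by simp
    also have "\<dots> = b * g * q^3" using g(3) unfolding q_def by (simp add: mult.assoc)
    finally show ?thesis .
  qed
  define s where "s = p / q"
  define r where "r = s * a / c"
  have s0: "s \<noteq> 0" using pq by (simp add: s_def)
  have r0: "r \<noteq> 0" using s0 assms(7,9) by (simp add: r_def)
  have e1: "a * s = r * c" using assms(9) by (simp add: r_def)
  have e2: "b = r * s^2 * d"
    using aux[OF assms(7,8) g(1) pq] unfolding r_def s_def by (simp only: c d[symmetric])
  have ne: "\<And>i. ee r s i \<noteq> 0" using ee_nz[OF r0 s0] .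
  have img: "dconj (ee r s) ` J3 u a b i = J3 u c d i" for i
  proof (cases "i = 0")
    case True thus ?thesis using J3_img_0[OF ne] by simp
  next
    case False thus ?thesis using J3_img_pos[OF r0 s0 e1 e2] by simp
  qed
  show ?thesis unfolding J3_conjugate_def
  proof (intro exI conjI allI impI)
    show "lie_aut_sl3 (dconj (ee r s))" using dconj_aut[OF ne] .
    fix i :: nat assume i: "i < 4"
    show "\<exists>!j. j < 4 \<and> dconj (ee r s) ` J3 u a b i = J3 u c d j"
    proof (rule ex1I[of _ i])
      show "i < 4 \<and> dconj (ee r s) ` J3 u a b i = J3 u c d i" using i img by simp
    next
      fix j assume j: "j < 4 \<and> dconj (ee r s) ` J3 u a b i = J3 u c d j"
      hence "J3 u c d j = J3 u c d i" using img[of i] by simp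
      thus "j = i" using J3_distinct[OF assms(3,4) _ i assms(9), of j] j by blast
    qed
  qed
qed
end
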